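(* Assume $\mathfrak p<\mathfrak t$ and let $\lambda=\mathfrak p$. Let $\mathcal B\subseteq[\omega]^{\aleph_0}$ exemplify $\mathfrak p$. Then there exist a regular cardinal $\kappa<\lambda$ and a $\subseteq^*$-decreasing sequence $\langle A_i:i<\kappa\rangle$ of members of $[\omega]^{\aleph_0}$ (i.e. $A_j\subseteq^* A_i$ for $i<j<\kappa$) such that (a) $A_i\cap B$ is infinite for every $i<\kappa$ and every $B\in\mathcal B$, and (b) if $A\in[\omega]^{\aleph_0}$ is a pseudo-intersection of $\{A_i:i<\kappa\}$, then $A\cap B$ is finite for some $B\in\mathcal B$.
   Context: $[\omega]^{\aleph_0}$ is the set of infinite subsets of $\omega$; for $A,B\subseteq\omega$, $A\subseteq^* B$ means $A\setminus B$ is finite. A set $A\in[\omega]^{\aleph_0}$ is a pseudo-intersection of a family $\mathcal C\subseteq[\omega]^{\aleph_0}$ if $A\subseteq^* C$ for all $C\in\mathcal C$. A tower is a sequence $\langle X_\alpha:\alpha<\kappa\rangle\subseteq[\omega]^{\aleph_0}$ with $X_\beta\subseteq^*X_\alpha$ for $\alpha<\beta<\kappa$ and such that $\{X_\alpha:\alpha<\kappa\}$ has no pseudo-intersection. $\mathfrak p$ is the least cardinality of a family $\mathcal B\subseteq[\omega]^{\aleph_0}$ all of whose finite subfamilies have infinite intersection but which has no pseudo-intersection; $\mathfrak t$ is the least length of a tower. A family $\mathcal B\subseteq[\omega]^{\aleph_0}$ exemplifies $\mathfrak p$ if it is closed under finite intersections, has no pseudo-intersection, and $|\mathcal B|=\mathfrak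 p$. *)

theory Defs
  imports Main
begin

definition almost_subset :: "nat set \<Rightarrow> nat set \<Rightarrow> bool" where
  "almost_subset A B \<longleftrightarrow> finite (A - B)"

definition pseudo_intersection :: "nat set \<Rightarrow> nat set set \<Rightarrow> bool" where
  "pseudo_intersection A \<C> \<longleftrightarrow> infinite A \<and> (\<forall>C\<in>\<C>. almost_subset A C)"

definition sfip :: "nat set set \<Rightarrow> bool" where
  "sfip \<C> \<longleftrightarrow> (\<forall>C\<in>\<C>. infinite C) \<and>
     (\<forall>F. F \<subseteq> \<C> \<and> finite F \<and> F \<noteq> {} \<longrightarrow> infinite (\<Inter>F))"

text \<open>Families whose cardinalities \<pp> is the least of.\<close>
definition p_family :: "nat set set \<Rightarrow> bool" where
  "p_family \<C> \<longleftrightarrow> sfip \<C> \<and> \<not> (\<exists>A. pseudo_intersection A \<C>)"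

definition tower :: "'j rel \<Rightarrow> ('j \<Rightarrow> nat set) \<Rightarrow> bool" where
  "tower r X \<longleftrightarrow> Well_order r \<and> (\<forall>\<alpha>\<in>Field r. infinite (X \<alpha>)) \<and>
     (\<forall>\<alpha> \<beta>. (\<alpha>, \<beta>) \<in> r \<and> \<alpha> \<noteq> \<beta> \<longrightarrow> almost_subset (X \<beta>) (X \<alpha>)) \<and>
     \<not> (\<exists>A. pseudo_intersection A (X ` Field r))"

text \<open>\<pp> < \<tt>: some family witnessing the definition of \<pp> (hence also one of size \<pp>)
  has cardinality strictly below the length of every tower.  Since \<tt> \<le> \<cc>,
  towers indexed by well-orders on subsets of nat set suffice.\<close>
definition p_less_t :: bool where
  "p_less_t \<longleftrightarrow> (\<exists>\<F>. p_family \<F> \<and>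
     (\<forall>(r :: nat set rel) X. tower r X \<longrightarrow> (card_of \<F>, r) \<in> ordLess))"

definition exemplifies_p :: "nat set set \<Rightarrow> bool" where
  "exemplifies_p \<B> \<longleftrightarrow> (\<forall>B\<in>\<B>. infinite B) \<and>
     (\<forall>B1\<in>\<B>. \<forall>B2\<in>\<B>. B1 \<inter> B2 \<in> \<B>) \<and>
     \<not> (\<exists>A. pseudo_intersection A \<B>) \<and>
     (\<forall>\<F>. p_family \<F> \<longrightarrow> (card_of \<B>, card_of \<F>) \<in> ordLeq)"

end

theory Submission
  imports Defs
begin

lemma almost_subset_trans:
  "almost_subset A B \<Longrightarrow> almost_subset B C \<Longrightarrow> almost_subset A C"
  unfolding almost_subset_def
  by (rule finite_subset[of _ "(A - B) \<union> (B - C)"]) auto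

lemma almost_subset_refl: "almost_subset A A"
  unfolding almost_subset_def by simp

lemma Restr_ordLeq:
  assumes wo: "Well_order s" and AF: "A \<subseteq> Field s"
  shows "(Restr s A, s) \<in> ordLeq"
proof (rule ccontr)
  assume "(Restr s A, s) \<notin> ordLeq"
  then have "(s, Restr s A) \<in> ordLess" using ordLess_or_ordLeq Well_order_Restr wo by blast
  then obtain f where emb: "embed s (Restr s A) f"
    and nb: "\<not> bij_betw f (Field s) (Field (Restr s A))"
    unfolding ordLess_def embedS_def by auto
  have refl: "Refl s" using wo by (simp add: wo_rel.REFL wo_rel_def)
  have ant: "antisym s" using wo by (simp add: wo_rel.ANTISYM wo_rel_def)
  have tot: "\<forall>a \<in> Field s. \<forall>b \<in> Field s. (a,b) \<in> s \<or> (b,a) \<in> s"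
    using wo by (simp add: wo_rel.TOTALS wo_rel_def)
  have FA: "Field (Restr s A) = A" using Refl_Field_Restr2[OF refl AF] .
  have img: "f ` Field s \<subseteq> A" using embed_Field[OF emb] FA by simp
  have inj: "inj_on f (Field s)" using embed_inj_on[OF wo emb] .
  have ofil: "wo_rel.ofilter (Restr s A) (f ` Field s)"
    using embed_Field_ofilter[OF wo Well_order_Restr[OF wo] emb] .
  have neq: "f ` Field s \<noteq> A" using nb inj FA unfolding bij_betw_def by auto
  then obtain a where aA: "a \<in> A" and an: "a \<notin> f ` Field s" using img by blast
  have below: "(f x, a) \<in> s \<and> f x \<noteq> a" if x: "x \<in> Field s" for x
  proof -
    have fxA: "f x \<in> A" using img x by blast
    have "f x \<noteq> a" using an x by blast
    moreover have "(f x, a) \<in> s"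
    proof (rule ccontr)
      assume "(f x, a) \<notin> s"
      then have "(a, f x) \<in> s" using tot fxA aA AF by blast
      then have "(a, f x) \<in> Restr s A" using fxA aA by blast
      then have "a \<in> under (Restr s A) (f x)" unfolding under_def by blast
      then have "a \<in> f ` Field s" using ofil x unfolding wo_rel.ofilter_def[OF Well_order_Restr[OF wo, unfolded wo_rel_def[symmetric]]] by blast
      then show False using an by blast
    qed
    ultimately show ?thesis by blast
  qed
  have comp: "compat s (Restr s A) f" using embed_compat[OF emb] .
  have mono: "(x, f x) \<in> s" if x: "x \<in> Field s" for x
  proof (rule ccontr)
    assume nx: "(x, f x) \<notin> s"
    let ?Q = "{x \<in> Field s. (x, f x) \<notin> s}"
    have wf: "wf (s - Id)" using wo unfolding well_order_on_def by blast
    obtain x0 where x0Q: "x0 \<in> ?Q" and x0min: "\<forall>y. (y, x0) \<in> s - Id \<longrightarrow> y \<notin> ?Q"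
      using wfE_min[OF wf, of x ?Q] x nx by blast
    have x0F: "x0 \<in> Field s" and x0n: "(x0, f x0) \<notin> s" using x0Q by auto
    have fx0F: "f x0 \<in> Field s" using img x0F AF by blast
    have 1: "(f x0, x0) \<in> s" using tot x0F fx0F x0n by blast
    have 2: "f x0 \<noteq> x0" using x0n refl x0F unfolding refl_on_def by force
    have 3: "(f (f x0), f x0) \<in> s" using comp 1 unfolding compat_def by blast
    have 4: "f (f x0) \<noteq> f x0" using inj 2 x0F fx0F unfolding inj_on_def by blast
    have "(f x0, f (f x0)) \<notin> s" using ant 3 4 unfolding antisym_def by blast
    then have "f x0 \<in> ?Q" using fx0F by blast
    then show False using x0min 1 2 by blast
  qed
  have "a \<in> Field s" using aA AF by blast
  then have "(a, f a) \<in> s" "(f a, a) \<in> s" "f a \<noteq> a" using mono below by auto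
  then show False using ant unfolding antisym_def by blast
qed


lemma RB:
  assumes wo: "Well_order r" and K: "K \<subseteq> Field r"
    and cof: "\<forall>a\<in>Field r. \<exists>k\<in>K. (a,k) \<in> r"
    and s: "well_order_on K s"
  shows "\<exists>K'\<subseteq>K. (\<forall>a\<in>Field r. \<exists>k\<in>K'. (a,k) \<in> r) \<and> (Restr r K', s) \<in> ordLeq"
proof -
  have Fs: "Field s = K" using well_order_on_Field[OF s] by simp
  have wos: "Well_order s" using s Fs by simp
  have refl: "Refl r" using wo by (simp add: wo_rel.REFL wo_rel_def)
  have ant: "antisym r" using wo by (simp add: wo_rel.ANTISYM wo_rel_def)
  have trr: "trans r" using wo by (simp add: wo_rel.TRANS wo_rel_def)
  have tot: "\<forall>a \<in> Field r. \<forall>b \<in> Field r. (a,b) \<in> r \<or> (b,a) \<in> r"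
    using wo by (simp add: wo_rel.TOTALS wo_rel_def)
  have refls: "Refl s" using wos by (simp add: wo_rel.REFL wo_rel_def)
  have ants: "antisym s" using wos by (simp add: wo_rel.ANTISYM wo_rel_def)
  have tots: "\<forall>a \<in> Field s. \<forall>b \<in> Field s. (a,b) \<in> s \<or> (b,a) \<in> s"
    using wos by (simp add: wo_rel.TOTALS wo_rel_def)
  define K' where "K' = {x \<in> K. \<forall>y. (y,x) \<in> s \<and> y \<noteq> x \<longrightarrow> (y,x) \<in> r}"
  have K'K: "K' \<subseteq> K" unfolding K'_def by blast
  have cof': "\<forall>a\<in>Field r. \<exists>k\<in>K'. (a,k) \<in> r"
  proof
    fix a assume a: "a \<in> Field r"
    let ?Q = "{x \<in> K. (a,x) \<in> r}"
    obtain k where "k \<in> ?Q" using cof a by blast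
    have wf: "wf (s - Id)" using wos unfolding well_order_on_def by blast
    obtain x where xQ: "x \<in> ?Q" and xmin: "\<forall>y. (y, x) \<in> s - Id \<longrightarrow> y \<notin> ?Q"
      using wfE_min[OF wf \<open>k \<in> ?Q\<close>] by blast
    have "\<forall>y. (y,x) \<in> s \<and> y \<noteq> x \<longrightarrow> (y,x) \<in> r"
    proof (intro allI impI)
      fix y assume y: "(y,x) \<in> s \<and> y \<noteq> x"
      then have yK: "y \<in> K" using Fs unfolding Field_def by blast
      have "(a,y) \<notin> r" using xmin y yK by blast
      then have "(y,a) \<in> r" using tot a yK K by blast
      then show "(y,x) \<in> r" using xQ trr unfolding trans_def by blast
    qed
    then have "x \<in> K'" using xQ unfolding K'_def by blast
    then show "\<exists>k\<in>K'. (a,k) \<in> r" using xQ by blast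
  qed
  have eq: "Restr r K' = Restr s K'"
  proof (intro set_eqI iffI)
    fix p assume p: "p \<in> Restr r K'"
    obtain x y where pxy: "p = (x,y)" by (cases p)
    have xK: "x \<in> K'" "y \<in> K'" "(x,y) \<in> r" using p pxy by auto
    show "p \<in> Restr s K'"
    proof (cases "x = y")
      case True then show ?thesis using xK refls K'K Fs pxy unfolding refl_on_def by auto
    next
      case False
      show ?thesis
      proof (rule ccontr)
        assume "p \<notin> Restr s K'"
        then have "(x,y) \<notin> s" using pxy xK by blast
        then have "(y,x) \<in> s" using tots xK K'K Fs by blast
        then have "(y,x) \<in> r" using xK False unfolding K'_def by blast
        then show False using ant xK False unfolding antisym_def by blast
      qed
    qed
  next
    fix p assume p: "p \<in> Restr s K'"
    obtain x y where pxy: "p = (x,y)" by (cases p)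
    have xK: "x \<in> K'" "y \<in> K'" "(x,y) \<in> s" using p pxy by auto
    show "p \<in> Restr r K'"
    proof (cases "x = y")
      case True then show ?thesis using xK refl K'K K pxy unfolding refl_on_def by auto
    next
      case False
      then show ?thesis using xK pxy unfolding K'_def by blast
    qed
  qed
  have "(Restr s K', s) \<in> ordLeq" using Restr_ordLeq[OF wos] K'K Fs by simp
  then show ?thesis using eq K'K cof' by auto
qed

definition good :: "nat set set \<Rightarrow> nat set rel \<Rightarrow> (nat set \<Rightarrow> nat set) \<Rightarrow> bool" where
  "good BB r A \<longleftrightarrow> Well_order r \<and> (\<forall>i\<in>Field r. \<forall>B\<in>BB. infinite (A i \<inter> B)) \<and>
     (\<forall>i j. (i, j) \<in> r \<and> i \<noteq> j \<longrightarrow> almost_subset (A j) (A i)) \<and>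
     (\<forall>X. pseudo_intersection X (A ` Field r) \<longrightarrow> (\<exists>B\<in>BB. finite (X \<inter> B)))"

lemma good_cofinal:
  assumes g: "good BB r A" and K: "K \<subseteq> Field r"
    and cof: "\<forall>a\<in>Field r. \<exists>k\<in>K. (a,k) \<in> r"
  shows "good BB (Restr r K) A"
proof -
  have wo: "Well_order r" using g unfolding good_def by blast
  have refl: "Refl r" using wo by (simp add: wo_rel.REFL wo_rel_def)
  have F: "Field (Restr r K) = K" using Refl_Field_Restr2[OF refl K] .
  have dec: "\<forall>i j. (i, j) \<in> r \<and> i \<noteq> j \<longrightarrow> almost_subset (A j) (A i)" using g unfolding good_def by blast
  have "pseudo_intersection X (A ` Field r)" if X: "pseudo_intersection X (A ` K)" for X
    unfolding pseudo_intersection_def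
  proof (intro conjI ballI)
    show "infinite X" using X unfolding pseudo_intersection_def by blast
    fix C assume "C \<in> A ` Field r"
    then obtain i where i: "i \<in> Field r" "C = A i" by blast
    obtain k where k: "k \<in> K" "(i,k) \<in> r" using cof i by blast
    have Xk: "almost_subset X (A k)" using X k unfolding pseudo_intersection_def by blast
    show "almost_subset X C"
    proof (cases "i = k")
      case True then show ?thesis using Xk i by simp
    next
      case False then show ?thesis using Xk dec k i almost_subset_trans by blast
    qed
  qed
  moreover have W: "well_order_on K (Restr r K)" using Well_order_Restr[OF wo, of K] F by simp
  ultimately show ?thesis using g F K unfolding good_def F by auto
qed

lemma good_nomax:
  assumes g: "good BB r A" and ne: "BB \<noteq> {}" and inf: "\<forall>B\<in>BB. infinite B"
  shows "Field r \<noteq> {}" and "\<forall>a\<in>Field r. \<exists>b\<in>Field r. (a,b) \<in> r \<and> a \<noteq> b"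
proof -
  have wo: "Well_order r" using g unfolding good_def by blast
  have tot: "\<forall>a \<in> Field r. \<forall>b \<in> Field r. (a,b) \<in> r \<or> (b,a) \<in> r"
    using wo by (simp add: wo_rel.TOTALS wo_rel_def)
  have pos: "\<forall>i\<in>Field r. \<forall>B\<in>BB. infinite (A i \<inter> B)"
   and dec: "\<forall>i j. (i, j) \<in> r \<and> i \<noteq> j \<longrightarrow> almost_subset (A j) (A i)"
   and nopi: "\<forall>X. pseudo_intersection X (A ` Field r) \<longrightarrow> (\<exists>B\<in>BB. finite (X \<inter> B))"
    using g unfolding good_def by blast+
  show "Field r \<noteq> {}"
  proof
    assume e: "Field r = {}"
    have "pseudo_intersection UNIV (A ` Field r)" using e unfolding pseudo_intersection_def by simp
    then obtain B where "B \<in> BB" "finite B" using nopi by auto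
    then show False using inf by blast
  qed
  show "\<forall>a\<in>Field r. \<exists>b\<in>Field r. (a,b) \<in> r \<and> a \<noteq> b"
  proof (rule ccontr)
    assume "\<not> ?thesis"
    then obtain a where a: "a \<in> Field r" and amax: "\<forall>b\<in>Field r. (a,b) \<in> r \<longrightarrow> a = b" by blast
    obtain B0 where B0: "B0 \<in> BB" using ne by blast
    have "infinite (A a)" using pos a B0 by (meson infinite_super inf_le1)
    moreover have "almost_subset (A a) C" if CC: "C \<in> A ` Field r" for C
    proof -
      obtain i where i: "i \<in> Field r" "C = A i" using CC by blast
      show ?thesis
      proof (cases "i = a")
        case True then show ?thesis using i almost_subset_refl by simp
      next
        case False
        then have "(i,a) \<in> r" using tot i a amax by blast
        then show ?thesis using dec False i by blast
      qed
    qed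
    ultimately have "pseudo_intersection (A a) (A ` Field r)" unfolding pseudo_intersection_def by blast
    then show False using nopi pos a by blast
  qed
qed


lemma nomax_infinite:
  assumes wo: "Well_order r" and ne: "Field r \<noteq> {}"
    and nm: "\<forall>a\<in>Field r. \<exists>b\<in>Field r. (a,b) \<in> r \<and> a \<noteq> b"
  shows "infinite (Field r)"
proof
  assume fin: "finite (Field r)"
  have tot: "\<forall>a \<in> Field r. \<forall>b \<in> Field r. (a,b) \<in> r \<or> (b,a) \<in> r"
    using wo by (simp add: wo_rel.TOTALS wo_rel_def)
  have ant: "antisym r" using wo by (simp add: wo_rel.ANTISYM wo_rel_def)
  have trr: "trans r" using wo by (simp add: wo_rel.TRANS wo_rel_def)
  have refl: "Refl r" using wo by (simp add: wo_rel.REFL wo_rel_def)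
  have "F \<subseteq> Field r \<longrightarrow> (\<exists>m\<in>F. \<forall>x\<in>F. (x,m) \<in> r)" if "finite F" "F \<noteq> {}" for F
    using that
  proof (induction F rule: finite_ne_induct)
    case (singleton x) then show ?case using refl unfolding refl_on_def by auto
  next
    case (insert x F)
    show ?case
    proof
      assume sub: "insert x F \<subseteq> Field r"
      then obtain m where m: "m \<in> F" "\<forall>y\<in>F. (y,m) \<in> r" using insert by auto
      have xm: "x \<in> Field r" "m \<in> Field r" using sub m by auto
      show "\<exists>m\<in>insert x F. \<forall>y\<in>insert x F. (y,m) \<in> r"
      proof (cases "(x,m) \<in> r")
        case True then show ?thesis using m by auto
      next
        case False
        then have "(m,x) \<in> r" using tot xm by blast
        then have "\<forall>y\<in>insert x F. (y,x) \<in> r" using m trr refl xm unfolding trans_def refl_on_def by blast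
        then show ?thesis by blast
      qed
    qed
  qed
  then obtain m where m: "m \<in> Field r" "\<forall>x\<in>Field r. (x,m) \<in> r" using fin ne by blast
  then obtain b where "b \<in> Field r" "(m,b) \<in> r" "m \<noteq> b" using nm by blast
  then show False using m ant unfolding antisym_def by blast
qed

lemma exists_good:
  fixes BB :: "nat set set"
  assumes pos: "\<forall>B\<in>BB. infinite B" and cl: "\<forall>B1\<in>BB. \<forall>B2\<in>BB. B1 \<inter> B2 \<in> BB"
    and nopi: "\<not> (\<exists>A. pseudo_intersection A BB)"
    and notower: "\<And>A. \<not> tower (card_of BB) A"
  shows "\<exists>r A. good BB r A \<and> (r, card_of BB) \<in> ordLess"
proof -
  let ?W = "card_of BB"
  have woW: "Well_order ?W" by (rule card_of_Well_order)
  have FW: "Field ?W = BB" by (rule Field_card_of)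
  have tot: "\<forall>a \<in> BB. \<forall>b \<in> BB. (a,b) \<in> ?W \<or> (b,a) \<in> ?W"
    using woW FW by (metis wo_rel.TOTALS wo_rel_def)
  have ant: "antisym ?W" using woW by (simp add: wo_rel.ANTISYM wo_rel_def)
  have ne: "BB \<noteq> {}"
  proof
    assume "BB = {}"
    then have "pseudo_intersection UNIV BB" unfolding pseudo_intersection_def by simp
    then show False using nopi by blast
  qed
  define P where "P = {G :: (nat set \<times> nat set) set.
     (\<forall>b X. (b,X) \<in> G \<longrightarrow> b \<in> BB \<and> (\<forall>B\<in>BB. infinite (X \<inter> B)) \<and> almost_subset X b) \<and>
     (\<forall>b X b' X'. (b,X) \<in> G \<and> (b',X') \<in> G \<and> (b',b) \<in> ?W \<and> b' \<noteq> b \<longrightarrow> almost_subset X X') \<and>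
     (\<forall>b X X'. (b,X) \<in> G \<and> (b,X') \<in> G \<longrightarrow> X = X') \<and>
     (\<forall>b X b'. (b,X) \<in> G \<and> (b',b) \<in> ?W \<longrightarrow> b' \<in> Domain G)}"
  have "\<forall>C\<in>chains P. \<Union>C \<in> P"
  proof
    fix C assume C: "C \<in> chains P"
    then have CP: "C \<subseteq> P" and ch: "\<forall>G1\<in>C. \<forall>G2\<in>C. G1 \<subseteq> G2 \<or> G2 \<subseteq> G1"
      unfolding chains_def chain_subset_def by auto
    have two: "\<exists>G\<in>C. p \<in> G \<and> q \<in> G" if pq: "p \<in> \<Union>C" "q \<in> \<Union>C" for p q
    proof -
      obtain G1 G2 where g: "G1 \<in> C" "p \<in> G1" "G2 \<in> C" "q \<in> G2" using pq by blast
      have "G1 \<subseteq> G2 \<or> G2 \<subseteq> G1" using ch g(1,3) by blast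
      then show ?thesis
      proof
        assume "G1 \<subseteq> G2" then show ?thesis using g by blast
      next
        assume "G2 \<subseteq> G1" then show ?thesis using g by blast
      qed
    qed
    have GP: "G \<in> P" if "G \<in> C" for G using CP that by blast
    note GD = GP[unfolded P_def mem_Collect_eq]
    have c1: "\<forall>b X. (b,X) \<in> \<Union>C \<longrightarrow> b \<in> BB \<and> (\<forall>B\<in>BB. infinite (X \<inter> B)) \<and> almost_subset X b"
    proof (intro allI impI)
      fix b X assume "(b,X) \<in> \<Union>C"
      then obtain G where G: "G \<in> C" "(b,X) \<in> G" by blast
      show "b \<in> BB \<and> (\<forall>B\<in>BB. infinite (X \<inter> B)) \<and> almost_subset X b"
        using conjunct1[OF GD[OF G(1)]] G(2) by blast
    qed
    have c2: "\<forall>b X b' X'. (b,X) \<in> \<Union>C \<and> (b',X') \<in> \<Union>C \<and> (b',b) \<in> ?W \<and> b' \<noteq> b \<longrightarrow> almost_subset X X'"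
    proof (intro allI impI)
      fix b X b' X' assume h: "(b,X) \<in> \<Union>C \<and> (b',X') \<in> \<Union>C \<and> (b',b) \<in> ?W \<and> b' \<noteq> b"
      then obtain G where G: "G \<in> C" "(b,X) \<in> G" "(b',X') \<in> G" using two by blast
      show "almost_subset X X'" using conjunct1[OF conjunct2[OF GD[OF G(1)]]] G(2,3) h by blast
    qed
    have c3: "\<forall>b X X'. (b,X) \<in> \<Union>C \<and> (b,X') \<in> \<Union>C \<longrightarrow> X = X'"
    proof (intro allI impI)
      fix b X X' assume h: "(b,X) \<in> \<Union>C \<and> (b,X') \<in> \<Union>C"
      then obtain G where G: "G \<in> C" "(b,X) \<in> G" "(b,X') \<in> G" using two by blast
      show "X = X'" using conjunct1[OF conjunct2[OF conjunct2[OF GD[OF G(1)]]]] G(2,3) by blast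
    qed
    have c4: "\<forall>b X b'. (b,X) \<in> \<Union>C \<and> (b',b) \<in> ?W \<longrightarrow> b' \<in> Domain (\<Union>C)"
    proof (intro allI impI)
      fix b X b' assume h: "(b,X) \<in> \<Union>C \<and> (b',b) \<in> ?W"
      then obtain G where G: "G \<in> C" "(b,X) \<in> G" by blast
      have "b' \<in> Domain G" using conjunct2[OF conjunct2[OF conjunct2[OF GD[OF G(1)]]]] G(2) h by blast
      then show "b' \<in> Domain (\<Union>C)" using G by blast
    qed
    show "\<Union>C \<in> P" unfolding P_def mem_Collect_eq using c1 c2 c3 c4 by (intro conjI)
  qed
  then obtain M where MP: "M \<in> P" and Mmax: "\<forall>G\<in>P. M \<subseteq> G \<longrightarrow> G = M"
    using Zorn_Lemma[of P] by blast
  have M1: "\<And>b X. (b,X) \<in> M \<Longrightarrow> b \<in> BB \<and> (\<forall>B\<in>BB. infinite (X \<inter> B)) \<and> almost_subset X b"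
    and M2: "\<And>b X b' X'. (b,X) \<in> M \<Longrightarrow> (b',X') \<in> M \<Longrightarrow> (b',b) \<in> ?W \<Longrightarrow> b' \<noteq> b \<Longrightarrow> almost_subset X X'"
    and M3: "\<And>b X X'. (b,X) \<in> M \<Longrightarrow> (b,X') \<in> M \<Longrightarrow> X = X'"
    and M4: "\<And>b X b'. (b,X) \<in> M \<Longrightarrow> (b',b) \<in> ?W \<Longrightarrow> b' \<in> Domain M"
  proof -
    note MP' = MP[unfolded P_def mem_Collect_eq]
    show "\<And>b X. (b,X) \<in> M \<Longrightarrow> b \<in> BB \<and> (\<forall>B\<in>BB. infinite (X \<inter> B)) \<and> almost_subset X b"
      using conjunct1[OF MP'] by blast
    show "\<And>b X b' X'. (b,X) \<in> M \<Longrightarrow> (b',X') \<in> M \<Longrightarrow> (b',b) \<in> ?W \<Longrightarrow> b' \<noteq> b \<Longrightarrow> almost_subset X X'"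
      using conjunct1[OF conjunct2[OF MP']] by blast
    show "\<And>b X X'. (b,X) \<in> M \<Longrightarrow> (b,X') \<in> M \<Longrightarrow> X = X'"
      using conjunct1[OF conjunct2[OF conjunct2[OF MP']]] by blast
    show "\<And>b X b'. (b,X) \<in> M \<Longrightarrow> (b',b) \<in> ?W \<Longrightarrow> b' \<in> Domain M"
      using conjunct2[OF conjunct2[OF conjunct2[OF MP']]] by blast
  qed
  define S where "S = Domain M"
  define A where "A = (\<lambda>b. SOME X. (b,X) \<in> M)"
  have AM: "(b, A b) \<in> M" if "b \<in> S" for b
  proof -
    from that obtain X where "(b,X) \<in> M" unfolding S_def by blast
    then show ?thesis unfolding A_def by (rule someI)
  qed
  have SB: "S \<subseteq> BB" using M1 unfolding S_def by blast
  have Apos: "\<forall>b\<in>S. \<forall>B\<in>BB. infinite (A b \<inter> B)" using AM M1 by blast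
  have Asub: "\<forall>b\<in>S. almost_subset (A b) b" using AM M1 by blast
  have Adec: "\<forall>i j. (i,j) \<in> ?W \<and> i \<noteq> j \<and> i \<in> S \<and> j \<in> S \<longrightarrow> almost_subset (A j) (A i)"
    using AM M2 by blast
  have SneB: "S \<noteq> BB"
  proof
    assume SeqB: "S = BB"
    have "tower ?W A" unfolding tower_def
    proof (intro conjI)
      show "Well_order ?W" by (rule woW)
      obtain B0 where "B0 \<in> BB" using ne by blast
      then show "\<forall>\<alpha>\<in>Field ?W. infinite (A \<alpha>)" using Apos SeqB FW by (metis infinite_super inf_le1)
      show "\<forall>\<alpha> \<beta>. (\<alpha>, \<beta>) \<in> ?W \<and> \<alpha> \<noteq> \<beta> \<longrightarrow> almost_subset (A \<beta>) (A \<alpha>)"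
        using Adec SeqB FW unfolding Field_def by blast
      show "\<not> (\<exists>X. pseudo_intersection X (A ` Field ?W))"
      proof
        assume "\<exists>X. pseudo_intersection X (A ` Field ?W)"
        then obtain X where X: "pseudo_intersection X (A ` BB)" using FW by auto
        have "pseudo_intersection X BB" unfolding pseudo_intersection_def
        proof (intro conjI ballI)
          show "infinite X" using X unfolding pseudo_intersection_def by blast
          fix b assume "b \<in> BB"
          then show "almost_subset X b" using X Asub SeqB almost_subset_trans
            unfolding pseudo_intersection_def by blast
        qed
        then show False using nopi by blast
      qed
    qed
    then show False using notower by blast
  qed
  then obtain c0 where "c0 \<in> BB - S" using SB by blast
  have wfW: "wf (?W - Id)" using woW unfolding well_order_on_def by blast
  obtain c where cBS: "c \<in> BB - S" and cmin: "\<forall>y. (y, c) \<in> ?W - Id \<longrightarrow> y \<notin> BB - S"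
    using wfE_min[OF wfW \<open>c0 \<in> BB - S\<close>] by blast
  have Sund: "S = underS ?W c"
  proof (intro set_eqI iffI)
    fix b assume b: "b \<in> S"
    then have "b \<noteq> c" using cBS by blast
    moreover have "(b,c) \<in> ?W"
    proof (rule ccontr)
      assume "(b,c) \<notin> ?W"
      then have "(c,b) \<in> ?W" using tot b SB cBS by blast
      then have "c \<in> S" using M4 AM b unfolding S_def by blast
      then show False using cBS by blast
    qed
    ultimately show "b \<in> underS ?W c" unfolding underS_def by blast
  next
    fix b assume "b \<in> underS ?W c"
    then have b: "b \<noteq> c" "(b,c) \<in> ?W" unfolding underS_def by auto
    then have "b \<in> BB" using FW unfolding Field_def by blast
    then show "b \<in> S" using cmin b by blast
  qed
  let ?r = "Restr ?W S"
  have less: "(?r, ?W) \<in> ordLess" using Sund underS_Restr_ordLess[OF woW] FW ne by simp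
  have reflW: "Refl ?W" using woW by (simp add: wo_rel.REFL wo_rel_def)
  have Fr: "Field ?r = S" using Refl_Field_Restr2[OF reflW] SB FW by simp
  have "good BB ?r A"
    unfolding good_def
  proof (intro conjI allI impI)
    show "Well_order ?r" using Well_order_Restr[OF woW] .
    show "\<forall>i\<in>Field ?r. \<forall>B\<in>BB. infinite (A i \<inter> B)" using Fr Apos by simp
  next
    fix i j assume "(i, j) \<in> ?r \<and> i \<noteq> j"
    then show "almost_subset (A j) (A i)" using Adec by blast
  next
    fix X assume X: "pseudo_intersection X (A ` Field ?r)"
    show "\<exists>B\<in>BB. finite (X \<inter> B)"
    proof (rule ccontr)
      assume "\<not> (\<exists>B\<in>BB. finite (X \<inter> B))"
      then have Xpos: "\<forall>B\<in>BB. infinite (X \<inter> B)" by blast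
      have XA: "\<forall>b\<in>S. almost_subset X (A b)" using X Fr unfolding pseudo_intersection_def by blast
      let ?G = "insert (c, X \<inter> c) M"
      have cB: "c \<in> BB" and cS: "c \<notin> S" using cBS by auto
      have g1: "\<forall>b Y. (b,Y) \<in> ?G \<longrightarrow> b \<in> BB \<and> (\<forall>B\<in>BB. infinite (Y \<inter> B)) \<and> almost_subset Y b"
      proof (intro allI impI)
        fix b Y assume "(b,Y) \<in> ?G"
        then consider "b = c" "Y = X \<inter> c" | "(b,Y) \<in> M" by blast
        then show "b \<in> BB \<and> (\<forall>B\<in>BB. infinite (Y \<inter> B)) \<and> almost_subset Y b"
        proof cases
          case 1
          have i1: "\<forall>B\<in>BB. infinite (Y \<inter> B)"
          proof
            fix B assume "B \<in> BB"
            then have "c \<inter> B \<in> BB" using cl cB by blast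
            then have "infinite (X \<inter> (c \<inter> B))" using Xpos by blast
            then show "infinite (Y \<inter> B)" using 1 by (simp add: Int_assoc)
          qed
          have "Y - b = {}" using 1 by blast
          then have i2: "almost_subset Y b" unfolding almost_subset_def by (metis finite.emptyI)
          show ?thesis using 1 cB i1 i2 by blast
        next
          case 2 then show ?thesis using M1 by blast
        qed
      qed
      have g2: "\<forall>b Y b' Y'. (b,Y) \<in> ?G \<and> (b',Y') \<in> ?G \<and> (b',b) \<in> ?W \<and> b' \<noteq> b \<longrightarrow> almost_subset Y Y'"
      proof (intro allI impI)
        fix b Y b' Y' assume h: "(b,Y) \<in> ?G \<and> (b',Y') \<in> ?G \<and> (b',b) \<in> ?W \<and> b' \<noteq> b"
        show "almost_subset Y Y'"
        proof (cases "(b,Y) \<in> M")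
          case True
          then have bS: "b \<in> S" unfolding S_def by blast
          then have "(b,c) \<in> ?W" "b \<noteq> c" using Sund unfolding underS_def by auto
          then have "(b',Y') \<in> M" using h ant unfolding antisym_def by blast
          then show ?thesis using M2 True h by blast
        next
          case False
          then have bY: "b = c" "Y = X \<inter> c" using h by auto
          then have "b' \<in> underS ?W c" using h unfolding underS_def by blast
          then have b'S: "b' \<in> S" using Sund by blast
          then have "(b',Y') \<in> M" using h cS unfolding S_def by blast
          then have "Y' = A b'" using M3 AM b'S by blast
          then have j1: "almost_subset X Y'" using XA b'S by blast
          have "Y - X = {}" using bY by blast
          then have j2: "almost_subset Y X" unfolding almost_subset_def by (metis finite.emptyI)
          show ?thesis using j1 j2 almost_subset_trans by blast
        qed
      qed
      have g3: "\<forall>b Y Y'. (b,Y) \<in> ?G \<and> (b,Y') \<in> ?G \<longrightarrow> Y = Y'"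
      proof (intro allI impI)
        fix b Y Y' assume h: "(b,Y) \<in> ?G \<and> (b,Y') \<in> ?G"
        then show "Y = Y'" using M3 cS unfolding S_def by blast
      qed
      have g4: "\<forall>b Y b'. (b,Y) \<in> ?G \<and> (b',b) \<in> ?W \<longrightarrow> b' \<in> Domain ?G"
      proof (intro allI impI)
        fix b Y b' assume h: "(b,Y) \<in> ?G \<and> (b',b) \<in> ?W"
        show "b' \<in> Domain ?G"
        proof (cases "(b,Y) \<in> M")
          case True then show ?thesis using M4 h by blast
        next
          case False
          then have "b = c" using h by blast
          then show ?thesis
          proof (cases "b' = c")
            case True then show ?thesis by blast
          next
            case False
            then have "b' \<in> underS ?W c" using h \<open>b = c\<close> unfolding underS_def by blast
            then show ?thesis using Sund unfolding S_def by blast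
          qed
        qed
      qed
      have "?G \<in> P" unfolding P_def mem_Collect_eq using g1 g2 g3 g4 by (intro conjI)
      moreover have "M \<subseteq> ?G" by blast
      moreover have "?G \<noteq> M" using cS unfolding S_def by blast
      ultimately show False using Mmax by blast
    qed
  qed
  then show ?thesis using less by blast
qed


theorem proposition2p3:
  fixes \<B> :: "nat set set"
  assumes "p_less_t"
    and "exemplifies_p \<B>"
  shows "\<exists>(\<kappa> :: nat set rel) (A :: nat set \<Rightarrow> nat set).
           Cinfinite \<kappa> \<and> regularCard \<kappa> \<and> (\<kappa>, card_of \<B>) \<in> ordLess \<and>
           (\<forall>i\<in>Field \<kappa>. infinite (A i)) \<and>
           (\<forall>i j. (i, j) \<in> \<kappa> \<and> i \<noteq> j \<longrightarrow> almost_subset (A j) (A i)) \<and>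
           (\<forall>i\<in>Field \<kappa>. \<forall>B\<in>\<B>. infinite (A i \<inter> B)) \<and>
           (\<forall>X. pseudo_intersection X (A ` Field \<kappa>) \<longrightarrow> (\<exists>B\<in>\<B>. finite (X \<inter> B)))"
proof -
  note ex = assms(2)[unfolded exemplifies_p_def]
  have pos: "\<forall>B\<in>\<B>. infinite B" using conjunct1[OF ex] .
  have cl: "\<forall>B1\<in>\<B>. \<forall>B2\<in>\<B>. B1 \<inter> B2 \<in> \<B>" using conjunct1[OF conjunct2[OF ex]] .
  have nopi: "\<not> (\<exists>A. pseudo_intersection A \<B>)" using conjunct1[OF conjunct2[OF conjunct2[OF ex]]] .
  have minF: "\<forall>F. p_family F \<longrightarrow> (card_of \<B>, card_of F) \<in> ordLeq"
    using conjunct2[OF conjunct2[OF conjunct2[OF ex]]] .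
  obtain F where pF: "p_family F"
    and tw: "\<forall>(r :: nat set rel) X. tower r X \<longrightarrow> (card_of F, r) \<in> ordLess"
    using assms(1) unfolding p_less_t_def by blast
  have BF: "(card_of \<B>, card_of F) \<in> ordLeq" using minF pF by blast
  have notower: "\<not> tower (card_of \<B>) A" for A
  proof
    assume "tower (card_of \<B>) A"
    then have "(card_of F, card_of \<B>) \<in> ordLess" using tw by blast
    then have "(card_of \<B>, card_of \<B>) \<in> ordLess" using BF ordLeq_ordLess_trans by blast
    then show False using ordLess_irreflexive by blast
  qed
  have ne: "\<B> \<noteq> {}"
  proof
    assume "\<B> = {}"
    then have "pseudo_intersection UNIV \<B>" unfolding pseudo_intersection_def by simp
    then show False using nopi by blast
  qed
  obtain r0 A0 where g0: "good \<B> r0 A0" and l0: "(r0, card_of \<B>) \<in> ordLess"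
    using exists_good[OF pos cl nopi notower] by blast
  let ?Q = "{r. \<exists>A. good \<B> r A}"
  have r0Q: "r0 \<in> ?Q" using g0 by blast
  obtain rm where rmQ: "rm \<in> ?Q" and rmmin: "\<forall>y. (y, rm) \<in> ordLess \<longrightarrow> y \<notin> ?Q"
    using wfE_min[OF wf_ordLess r0Q] by blast
  obtain Am where gm: "good \<B> rm Am" using rmQ by blast
  have wom: "Well_order rm" using gm unfolding good_def by blast
  have key: "(rm, card_of K) \<in> ordLeq"
    if K1: "K \<subseteq> Field rm" and K2: "\<forall>a\<in>Field rm. \<exists>k\<in>K. (a,k) \<in> rm" for K
  proof -
    obtain K' where K': "K' \<subseteq> K" "\<forall>a\<in>Field rm. \<exists>k\<in>K'. (a,k) \<in> rm"
        "(Restr rm K', card_of K) \<in> ordLeq"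
      using RB[OF wom K1 K2 card_of_well_order_on] by blast
    have "K' \<subseteq> Field rm" using K'(1) K1 by blast
    then have "good \<B> (Restr rm K') Am" using good_cofinal[OF gm _ K'(2)] by blast
    then have "(Restr rm K', rm) \<notin> ordLess" using rmmin by blast
    then have "(rm, Restr rm K') \<in> ordLeq"
      using ordLess_or_ordLeq[OF Well_order_Restr[OF wom] wom] by blast
    then show ?thesis using K'(3) ordLeq_transitive by blast
  qed
  have reflm: "Refl rm" using wom by (simp add: wo_rel.REFL wo_rel_def)
  have nmF: "Field rm \<noteq> {}" and nm: "\<forall>a\<in>Field rm. \<exists>b\<in>Field rm. (a,b) \<in> rm \<and> a \<noteq> b"
    using good_nomax[OF gm ne pos] by blast+
  have "\<forall>a\<in>Field rm. \<exists>k\<in>Field rm. (a,k) \<in> rm" using reflm unfolding refl_on_def by blast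
  then have full: "(rm, card_of (Field rm)) \<in> ordLeq" using key by blast
  have Card: "Card_order rm" using full Card_order_iff_ordLeq_card_of by blast
  have lst: "(card_of (Field rm), rm) \<in> ordLeq" using card_of_least wom by blast
  have reg: "regularCard rm"
    unfolding regularCard_def
  proof (intro allI impI)
    fix K assume K: "K \<subseteq> Field rm \<and> cofinal K rm"
    then have K2: "\<forall>a\<in>Field rm. \<exists>k\<in>K. (a,k) \<in> rm" unfolding cofinal_def by blast
    have 1: "(rm, card_of K) \<in> ordLeq" using key K K2 by blast
    have "(card_of K, card_of (Field rm)) \<in> ordLeq" using card_of_mono1 K by blast
    then have 2: "(card_of K, rm) \<in> ordLeq" using lst ordLeq_transitive by blast
    show "(card_of K, rm) \<in> ordIso" using 1 2 ordIso_iff_ordLeq by blast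
  qed
  have cinf: "BNF_Cardinal_Arithmetic.cinfinite rm" using nomax_infinite[OF wom nmF nm] by (simp add: BNF_Cardinal_Arithmetic.cinfinite_def)
  have "(r0, rm) \<notin> ordLess" using rmmin r0Q by blast
  then have "(rm, r0) \<in> ordLeq" using ordLess_or_ordLeq[OF _ wom] g0 unfolding good_def by blast
  then have less: "(rm, card_of \<B>) \<in> ordLess" using l0 ordLeq_ordLess_trans by blast
  obtain B0 where B0: "B0 \<in> \<B>" using ne by blast
  have gpos: "\<forall>i\<in>Field rm. \<forall>B\<in>\<B>. infinite (Am i \<inter> B)"
    and gdec: "\<forall>i j. (i, j) \<in> rm \<and> i \<noteq> j \<longrightarrow> almost_subset (Am j) (Am i)"
    and gpi: "\<forall>X. pseudo_intersection X (Am ` Field rm) \<longrightarrow> (\<exists>B\<in>\<B>. finite (X \<inter> B))"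
    using gm unfolding good_def by blast+
  have ginf: "\<forall>i\<in>Field rm. infinite (Am i)"
    using gpos B0 by (meson infinite_super inf_le1)
  show ?thesis using cinf Card reg less ginf gdec gpos gpi by blast
qed

end
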